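(* Let $d\ge 3$. There exist constants $C>1$ and $c\in(0,1)$ depending only on $d$ such that the following holds for every finite field $\mathbb F_q$ of characteristic greater than two. For $j\in\mathbb F_q$ let $S_j=\{x\in\mathbb F_q^d: x_1^2+\cdots+x_d^2=j\}$. Let $i,j\in\mathbb F_q^*$, $E\subset S_i$ and $F\subset S_j$. If $|E||F|\ge Cq^d$, then $|\mathcal D(E,F)|\ge c\,q$.
   Context: $\mathbb F_q$ is a finite field with $q$ elements and characteristic greater than two; $\mathbb F_q^*=\mathbb F_q\setminus\{0\}$. For $\alpha\in\mathbb F_q^d$, $\|\alpha\|=\alpha_1^2+\cdots+\alpha_d^2\in\mathbb F_q$, and for $E,F\subset\mathbb F_q^d$ the distance set is $\mathcal D(E,F)=\{\|x-y\|: x\in E,\ y\in F\}\subset\mathbb F_q$. *)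

theory Defs
  imports "HOL-Algebra.Algebra" "HOL-Library.FuncSet"
begin

definition fring_char :: "('a, 'b) ring_scheme \<Rightarrow> nat" where
  "fring_char R = (if \<exists>n::nat>0. add_pow R n \<one>\<^bsub>R\<^esub> = \<zero>\<^bsub>R\<^esub>
                  then (LEAST n::nat. n > 0 \<and> add_pow R n \<one>\<^bsub>R\<^esub> = \<zero>\<^bsub>R\<^esub>) else 0)"

definition vecs :: "('a, 'b) ring_scheme \<Rightarrow> nat \<Rightarrow> (nat \<Rightarrow> 'a) set" where
  "vecs R d = PiE {..<d} (\<lambda>_. carrier R)"

definition qnorm :: "('a, 'b) ring_scheme \<Rightarrow> nat \<Rightarrow> (nat \<Rightarrow> 'a) \<Rightarrow> 'a" where
  "qnorm R d x = finsum R (\<lambda>k. x k \<otimes>\<^bsub>R\<^esub> x k) {..<d}"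

definition sphere_ff :: "('a, 'b) ring_scheme \<Rightarrow> nat \<Rightarrow> 'a \<Rightarrow> (nat \<Rightarrow> 'a) set" where
  "sphere_ff R d j = {x \<in> vecs R d. qnorm R d x = j}"

definition dist_set :: "('a, 'b) ring_scheme \<Rightarrow> nat \<Rightarrow> (nat \<Rightarrow> 'a) set \<Rightarrow> (nat \<Rightarrow> 'a) set \<Rightarrow> 'a set" where
  "dist_set R d E F = {qnorm R d (\<lambda>k. x k \<ominus>\<^bsub>R\<^esub> y k) | x y. x \<in> E \<and> y \<in> F}"

end

theory Submission
  imports Defs Complex_Main
begin


lemma cs_sum:
  fixes a :: "'a \<Rightarrow> real"
  assumes "finite T"
  shows "(\<Sum>t\<in>T. a t)^2 \<le> real (card T) * (\<Sum>t\<in>T. (a t)^2)"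
proof -
  define n where "n = real (card T)"
  define S where "S = (\<Sum>t\<in>T. a t)"
  define Q where "Q = (\<Sum>t\<in>T. (a t)^2)"
  have "0 \<le> (\<Sum>t\<in>T. (n * a t - S)^2)" by (simp add: sum_nonneg)
  also have "\<dots> = (\<Sum>t\<in>T. n^2 * (a t)^2 - 2 * n * S * a t + S^2)"
    by (rule sum.cong) (auto simp: power2_eq_square algebra_simps)
  also have "\<dots> = n^2 * Q - 2 * n * S * S + n * S^2"
    unfolding Q_def S_def n_def by (simp add: sum.distrib sum_subtractf sum_distrib_left)
  also have "\<dots> = n * (n * Q - S^2)" by (simp add: power2_eq_square algebra_simps)
  finally have h: "0 \<le> n * (n * Q - S^2)" .
  show ?thesis
  proof (cases "n = 0")
    case True then have "T = {}" using assms n_def by simp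
    then show ?thesis by simp
  next
    case False then have "n > 0" using n_def by simp
    then show ?thesis using h unfolding S_def Q_def n_def[symmetric]
      by (simp add: zero_le_mult_iff)
  qed
qed

lemma mean_removal:
  fixes a :: "'x \<Rightarrow> 't \<Rightarrow> real"
  assumes XS: "finite XS" and T: "finite T" and q: "real (card T) = q" "q > 0"
    and f: "\<And>x. x \<in> XS \<Longrightarrow> (\<Sum>t\<in>T. a x t) = f"
  shows "(\<Sum>t\<in>T. (\<Sum>x\<in>XS. a x t)^2) \<le> (real (card XS) * f)^2 / q
          + real (card XS) * (\<Sum>x\<in>XS. (\<Sum>t\<in>T. (a x t)^2) - f^2 / q)"
proof -
  define m where "m = f / q"
  define b where "b x t = a x t - m" for x t
  define M where "M = real (card XS)"
  have bsum: "(\<Sum>t\<in>T. b x t) = 0" if "x \<in> XS" for x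
    using f[OF that] q unfolding b_def m_def by (simp add: sum_subtractf)
  have bsq: "(\<Sum>t\<in>T. (b x t)^2) = (\<Sum>t\<in>T. (a x t)^2) - f^2 / q" if "x \<in> XS" for x
  proof -
    have "(\<Sum>t\<in>T. (b x t)^2) = (\<Sum>t\<in>T. (a x t)^2 - 2 * m * a x t + m^2)"
      unfolding b_def by (rule sum.cong) (auto simp: power2_eq_square algebra_simps)
    also have "\<dots> = (\<Sum>t\<in>T. (a x t)^2) - 2 * m * f + q * m^2"
      using f[OF that] q by (simp add: sum.distrib sum_subtractf sum_distrib_left[symmetric])
    also have "\<dots> = (\<Sum>t\<in>T. (a x t)^2) - f^2 / q"
      using q unfolding m_def by (simp add: power2_eq_square field_simps)
    finally show ?thesis .
  qed
  have "(\<Sum>t\<in>T. (\<Sum>x\<in>XS. a x t)^2) = (\<Sum>t\<in>T. (M * m + (\<Sum>x\<in>XS. b x t))^2)"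
    unfolding b_def M_def by (rule sum.cong) (simp_all add: sum_subtractf)
  also have "\<dots> = (\<Sum>t\<in>T. (M*m)^2 + 2 * (M * m) * (\<Sum>x\<in>XS. b x t) + (\<Sum>x\<in>XS. b x t)^2)"
    by (rule sum.cong) (auto simp: power2_eq_square algebra_simps)
  also have "\<dots> = q * (M*m)^2 + 2 * (M*m) * (\<Sum>x\<in>XS. \<Sum>t\<in>T. b x t) + (\<Sum>t\<in>T. (\<Sum>x\<in>XS. b x t)^2)"
    using q by (simp add: sum.distrib sum_distrib_left[symmetric] sum.swap[of _ T XS])
  also have "(\<Sum>x\<in>XS. \<Sum>t\<in>T. b x t) = 0" using bsum by simp
  also have "(\<Sum>t\<in>T. (\<Sum>x\<in>XS. b x t)^2) \<le> (\<Sum>t\<in>T. M * (\<Sum>x\<in>XS. (b x t)^2))"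
    unfolding M_def by (rule sum_mono) (rule cs_sum[OF XS])
  also have "\<dots> = M * (\<Sum>x\<in>XS. \<Sum>t\<in>T. (b x t)^2)"
    by (simp add: sum_distrib_left[symmetric] sum.swap[of _ T XS])
  also have "\<dots> = M * (\<Sum>x\<in>XS. (\<Sum>t\<in>T. (a x t)^2) - f^2 / q)"
    using bsq by simp
  finally show ?thesis using q unfolding m_def M_def by (simp add: power2_eq_square field_simps)
qed

lemma fiber_sum:
  fixes \<phi> :: "'b \<Rightarrow> real"
  assumes A: "finite A" and B: "finite B" and im: "h ` A \<subseteq> B"
    and fib: "\<And>b. b \<in> B \<Longrightarrow> card {a \<in> A. h a = b} \<le> 2"
    and nn: "\<And>b. b \<in> B \<Longrightarrow> 0 \<le> \<phi> b"
  shows "(\<Sum>a\<in>A. \<phi> (h a)) \<le> 2 * (\<Sum>b\<in>B. \<phi> b)"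
proof -
  have "(\<Sum>a\<in>A. \<phi> (h a)) = (\<Sum>b\<in>h ` A. \<Sum>a\<in>{a \<in> A. h a = b}. \<phi> (h a))"
    by (rule sum.image_gen[OF A])
  also have "\<dots> = (\<Sum>b\<in>h ` A. real (card {a \<in> A. h a = b}) * \<phi> b)"
    by (rule sum.cong) auto
  also have "\<dots> \<le> (\<Sum>b\<in>h ` A. 2 * \<phi> b)"
    using im fib nn by (intro sum_mono mult_right_mono) auto
  also have "\<dots> \<le> (\<Sum>b\<in>B. 2 * \<phi> b)"
    using im nn B by (intro sum_mono2) auto
  finally show ?thesis by (simp add: sum_distrib_left)
qed

lemma card_pairs_eq:
  assumes F: "finite F" and T: "finite T" and g: "g ` F \<subseteq> T"
  shows "card {p \<in> F \<times> F. g (fst p) = g (snd p)} = (\<Sum>t\<in>T. (card {y \<in> F. g y = t})^2)"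
proof -
  have "{p \<in> F \<times> F. g (fst p) = g (snd p)} = (\<Union>t\<in>T. {y \<in> F. g y = t} \<times> {y \<in> F. g y = t})"
    using g by auto
  moreover have "card (\<Union>t\<in>T. {y \<in> F. g y = t} \<times> {y \<in> F. g y = t}) = (\<Sum>t\<in>T. card ({y \<in> F. g y = t} \<times> {y \<in> F. g y = t}))"
    using F T by (intro card_UN_disjoint) auto
  ultimately have "card {p \<in> F \<times> F. g (fst p) = g (snd p)} = (\<Sum>t\<in>T. card ({y \<in> F. g y = t} \<times> {y \<in> F. g y = t}))"
    by simp
  then show ?thesis by (simp add: card_cartesian_product power2_eq_square)
qed

lemma card_fibers_sum:
  assumes F: "finite F" and T: "finite T" and g: "g ` F \<subseteq> T"
  shows "(\<Sum>t\<in>T. card {y \<in> F. g y = t}) = card F"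
proof -
  have "F = (\<Union>t\<in>T. {y \<in> F. g y = t})" using g by auto
  then have "card F = card (\<Union>t\<in>T. {y \<in> F. g y = t})" by simp
  also have "\<dots> = (\<Sum>t\<in>T. card {y \<in> F. g y = t})"
    using F T by (intro card_UN_disjoint) auto
  finally show ?thesis by simp
qed



definition dotp :: "('a, 'b) ring_scheme \<Rightarrow> nat \<Rightarrow> (nat \<Rightarrow> 'a) \<Rightarrow> (nat \<Rightarrow> 'a) \<Rightarrow> 'a" where
  "dotp R d x y = finsum R (\<lambda>k. x k \<otimes>\<^bsub>R\<^esub> y k) {..<d}"
definition smultv :: "('a, 'b) ring_scheme \<Rightarrow> nat \<Rightarrow> 'a \<Rightarrow> (nat \<Rightarrow> 'a) \<Rightarrow> (nat \<Rightarrow> 'a)" where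
  "smultv R d s x = restrict (\<lambda>k. s \<otimes>\<^bsub>R\<^esub> x k) {..<d}"

lemma (in cring) eq_shift: assumes c: "a \<in> carrier R" "b \<in> carrier R" "c \<in> carrier R" "e \<in> carrier R"
  and h: "a \<oplus> b = c \<oplus> e"
  shows "a \<ominus> c = e \<ominus> b"
proof -
  have "a \<ominus> c = (a \<oplus> b) \<ominus> (c \<oplus> b)" using c by algebra
  also have "\<dots> = (c \<oplus> e) \<ominus> (c \<oplus> b)" using h by simp
  also have "\<dots> = e \<ominus> b" using c by algebra
  finally show ?thesis .
qed
lemma (in cring) prod_zero: assumes c: "p \<in> carrier R" "q \<in> carrier R" "r \<in> carrier R" "s \<in> carrier R"
  and h: "p \<otimes> r \<ominus> p \<otimes> s = q \<otimes> r \<ominus> q \<otimes> s"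
  shows "(p \<ominus> q) \<otimes> (r \<ominus> s) = \<zero>"
proof -
  have "(p \<ominus> q) \<otimes> (r \<ominus> s) = (p \<otimes> r \<ominus> p \<otimes> s) \<ominus> (q \<otimes> r \<ominus> q \<otimes> s)" using c by algebra
  also have "\<dots> = \<zero>" using h c by simp
  finally show ?thesis .
qed

definition Kf :: "('a, 'b) ring_scheme \<Rightarrow> nat \<Rightarrow> (nat \<Rightarrow> 'a) set \<Rightarrow> (nat \<Rightarrow> 'a) \<Rightarrow> nat" where
  "Kf R d F x = card {p \<in> F \<times> F. dotp R d x (fst p) = dotp R d x (snd p)}"

lemma card_filter_sum: "finite A \<Longrightarrow> card {x \<in> A. P x} = (\<Sum>x\<in>A. if P x then 1 else 0)"
  by (simp add: sum.inter_filter[symmetric])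

lemma swap_count:
  assumes "finite A" "finite B"
  shows "(\<Sum>x\<in>A. card {p \<in> B. P x p}) = (\<Sum>p\<in>B. card {x \<in> A. P x p})"
  using assms by (simp add: card_filter_sum sum.swap[of _ A B])

context field
begin

lemma vecsD: "x \<in> vecs R d \<Longrightarrow> k < d \<Longrightarrow> x k \<in> carrier R"
  by (auto simp: vecs_def PiE_def Pi_def)

lemma dotp_closed: "x \<in> vecs R d \<Longrightarrow> y \<in> vecs R d \<Longrightarrow> dotp R d x y \<in> carrier R"
  unfolding dotp_def by (intro finsum_closed) (auto simp: vecsD)

lemma qnorm_closed: "x \<in> vecs R d \<Longrightarrow> qnorm R d x \<in> carrier R"
  unfolding qnorm_def by (intro finsum_closed) (auto simp: vecsD)

lemma qnorm_sub:
  assumes x: "x \<in> vecs R d" and y: "y \<in> vecs R d"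
  shows "qnorm R d (\<lambda>k. x k \<ominus> y k) \<oplus> (dotp R d x y \<oplus> dotp R d x y) = qnorm R d x \<oplus> qnorm R d y"
proof -
  have "qnorm R d (\<lambda>k. x k \<ominus> y k) \<oplus> (dotp R d x y \<oplus> dotp R d x y)
     = (\<Oplus>k\<in>{..<d}. (x k \<ominus> y k) \<otimes> (x k \<ominus> y k) \<oplus> (x k \<otimes> y k \<oplus> x k \<otimes> y k))"
    unfolding qnorm_def dotp_def using x y
    by (simp add: finsum_addf vecsD Pi_def)
  also have "\<dots> = (\<Oplus>k\<in>{..<d}. x k \<otimes> x k \<oplus> y k \<otimes> y k)"
  proof (rule finsum_cong')
    fix k assume "k \<in> {..<d}"
    then have "x k \<in> carrier R" "y k \<in> carrier R" using x y vecsD by auto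
    then show "(x k \<ominus> y k) \<otimes> (x k \<ominus> y k) \<oplus> (x k \<otimes> y k \<oplus> x k \<otimes> y k) = x k \<otimes> x k \<oplus> y k \<otimes> y k"
      by algebra
  qed (use x y in \<open>auto simp: vecsD Pi_def\<close>)
  also have "\<dots> = qnorm R d x \<oplus> qnorm R d y"
    unfolding qnorm_def using x y by (simp add: finsum_addf vecsD Pi_def)
  finally show ?thesis .
qed

lemma two_ne_zero:
  assumes "fring_char R > 2" shows "\<one> \<oplus> \<one> \<noteq> \<zero>"
proof
  assume h: "\<one> \<oplus> \<one> = \<zero>"
  have a2: "add_pow R (2::nat) \<one> = \<zero>"
    using h by (simp add: add_pow_def numeral_2_eq_2)
  then have ex: "\<exists>n::nat>0. add_pow R n \<one> = \<zero>" by (intro exI[of _ 2]) simp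
  have "(LEAST n::nat. n > 0 \<and> add_pow R n \<one> = \<zero>) \<le> 2"
    by (rule Least_le) (use a2 in simp)
  then show False using assms ex unfolding fring_char_def by simp
qed

lemma qnorm_closed': "(\<And>k. k < d \<Longrightarrow> z k \<in> carrier R) \<Longrightarrow> qnorm R d z \<in> carrier R"
  unfolding qnorm_def by (intro finsum_closed) auto

lemma dist_eq_iff:
  assumes two: "\<one> \<oplus> \<one> \<noteq> \<zero>" and x: "x \<in> vecs R d" and y: "y \<in> vecs R d" and y': "y' \<in> vecs R d"
    and n: "qnorm R d y = qnorm R d y'"
  shows "(qnorm R d (\<lambda>k. x k \<ominus> y k) = qnorm R d (\<lambda>k. x k \<ominus> y' k)) \<longleftrightarrow> dotp R d x y = dotp R d x y'"
proof -
  define a where "a = qnorm R d (\<lambda>k. x k \<ominus> y k)"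
  define b where "b = qnorm R d (\<lambda>k. x k \<ominus> y' k)"
  define u where "u = dotp R d x y"
  define v where "v = dotp R d x y'"
  have ac: "a \<in> carrier R" unfolding a_def using x y by (intro qnorm_closed') (auto simp: vecsD)
  have bc: "b \<in> carrier R" unfolding b_def using x y' by (intro qnorm_closed') (auto simp: vecsD)
  have uc: "u \<in> carrier R" unfolding u_def using x y by (simp add: dotp_closed)
  have vc: "v \<in> carrier R" unfolding v_def using x y' by (simp add: dotp_closed)
  have e: "a \<oplus> (u \<oplus> u) = b \<oplus> (v \<oplus> v)"
    using qnorm_sub[OF x y] qnorm_sub[OF x y'] n unfolding a_def b_def u_def v_def by simp
  have u2: "(\<one> \<oplus> \<one>) \<otimes> u = u \<oplus> u" using uc by algebra
  have v2: "(\<one> \<oplus> \<one>) \<otimes> v = v \<oplus> v" using vc by algebra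
  have "a = b \<longleftrightarrow> (\<one> \<oplus> \<one>) \<otimes> u = (\<one> \<oplus> \<one>) \<otimes> v"
    unfolding u2 v2
  proof
    assume "a = b" then show "u \<oplus> u = v \<oplus> v" using e ac bc uc vc by simp
  next
    assume h: "u \<oplus> u = v \<oplus> v"
    have "a = (a \<oplus> (u \<oplus> u)) \<ominus> (u \<oplus> u)" using ac uc by algebra
    also have "\<dots> = (b \<oplus> (v \<oplus> v)) \<ominus> (v \<oplus> v)" using e h by simp
    also have "\<dots> = b" using bc vc by algebra
    finally show "a = b" .
  qed
  also have "\<dots> \<longleftrightarrow> u = v" using two uc vc by (intro m_lcancel) auto
  finally show ?thesis unfolding a_def b_def u_def v_def .
qed

lemma smultv_vecs: "s \<in> carrier R \<Longrightarrow> x \<in> vecs R d \<Longrightarrow> smultv R d s x \<in> vecs R d"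
  unfolding smultv_def vecs_def by (auto simp: PiE_def Pi_def)

lemma dotp_smult:
  assumes s: "s \<in> carrier R" and x: "x \<in> vecs R d" and y: "y \<in> vecs R d"
  shows "dotp R d (smultv R d s x) y = s \<otimes> dotp R d x y"
proof -
  have "dotp R d (smultv R d s x) y = (\<Oplus>k\<in>{..<d}. s \<otimes> (x k \<otimes> y k))"
    unfolding dotp_def smultv_def
    by (rule finsum_cong') (use s x y in \<open>auto simp: vecsD m_assoc Pi_def\<close>)
  also have "\<dots> = s \<otimes> dotp R d x y"
    unfolding dotp_def using s x y by (subst finsum_rdistr) (auto simp: vecsD Pi_def)
  finally show ?thesis .
qed

lemma qnorm_smult:
  assumes s: "s \<in> carrier R" and x: "x \<in> vecs R d"
  shows "qnorm R d (smultv R d s x) = (s \<otimes> s) \<otimes> qnorm R d x"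
proof -
  have "qnorm R d (smultv R d s x) = (\<Oplus>k\<in>{..<d}. (s \<otimes> s) \<otimes> (x k \<otimes> x k))"
    unfolding qnorm_def smultv_def
  proof (rule finsum_cong')
    fix k assume "k \<in> {..<d}"
    then have "x k \<in> carrier R" using x vecsD by auto
    then show "restrict (\<lambda>k. s \<otimes> x k) {..<d} k \<otimes> restrict (\<lambda>k. s \<otimes> x k) {..<d} k = (s \<otimes> s) \<otimes> (x k \<otimes> x k)"
      using s \<open>k \<in> {..<d}\<close> by simp algebra
  qed (use s x in \<open>auto simp: vecsD Pi_def\<close>)
  also have "\<dots> = (s \<otimes> s) \<otimes> qnorm R d x"
    unfolding qnorm_def using s x by (subst finsum_rdistr) (auto simp: vecsD Pi_def)
  finally show ?thesis .
qed

lemma dotp_zero: "y \<in> vecs R d \<Longrightarrow> dotp R d (restrict (\<lambda>k. \<zero>) {..<d}) y = \<zero>"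
proof -
  assume y: "y \<in> vecs R d"
  have "dotp R d (restrict (\<lambda>k. \<zero>) {..<d}) y = (\<Oplus>k\<in>{..<d}. \<zero>)"
    unfolding dotp_def by (rule finsum_cong') (use y in \<open>auto simp: vecsD\<close>)
  then show ?thesis by simp
qed

lemma card_vecs: "finite (carrier R) \<Longrightarrow> card (vecs R d) = card (carrier R) ^ d"
  unfolding vecs_def by (simp add: card_PiE)

lemma finite_vecs: "finite (carrier R) \<Longrightarrow> finite (vecs R d)"
  unfolding vecs_def by (simp add: finite_PiE)

lemma dotp_split:
  assumes x: "x \<in> vecs R d" and y: "y \<in> vecs R d" and k: "k < d"
  shows "dotp R d x y = x k \<otimes> y k \<oplus> (\<Oplus>l\<in>{..<d}-{k}. x l \<otimes> y l)"
proof -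
  have eq: "{..<d} = insert k ({..<d}-{k})" using k by auto
  have "dotp R d x y = (\<Oplus>l\<in>insert k ({..<d}-{k}). x l \<otimes> y l)"
    unfolding dotp_def by (subst eq) (rule refl)
  also have "\<dots> = x k \<otimes> y k \<oplus> (\<Oplus>l\<in>{..<d}-{k}. x l \<otimes> y l)"
    by (rule finsum_insert) (use x y k in \<open>auto simp: vecsD\<close>)
  finally show ?thesis .
qed

lemma hyperplane_card:
  assumes fin: "finite (carrier R)" and y: "y \<in> vecs R d" and y': "y' \<in> vecs R d" and ne: "y \<noteq> y'"
  shows "card {x \<in> vecs R d. dotp R d x y = dotp R d x y'} \<le> card (carrier R) ^ (d - 1)"
proof -
  obtain k where k: "k < d" "y k \<noteq> y' k"
  proof -
    have "\<exists>k<d. y k \<noteq> y' k"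
    proof (rule ccontr)
      assume "\<not> ?thesis"
      then have "\<forall>k\<in>{..<d}. y k = y' k" by auto
      then show False using PiE_ext[of y "{..<d}" "\<lambda>_. carrier R" y'] y y' ne unfolding vecs_def by blast
    qed
    then show ?thesis using that by blast
  qed
  let ?H = "{x \<in> vecs R d. dotp R d x y = dotp R d x y'}"
  let ?f = "\<lambda>x. restrict x ({..<d}-{k})"
  have inj: "inj_on ?f ?H"
  proof (rule inj_onI)
    fix x x' assume xH: "x \<in> ?H" and x'H: "x' \<in> ?H" and eq: "?f x = ?f x'"
    have x: "x \<in> vecs R d" and x': "x' \<in> vecs R d" using xH x'H by auto
    have off: "x l = x' l" if "l < d" "l \<noteq> k" for l
      using fun_cong[OF eq, of l] that by simp
    define A where "A = (\<Oplus>l\<in>{..<d}-{k}. x l \<otimes> y l)"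
    define B where "B = (\<Oplus>l\<in>{..<d}-{k}. x l \<otimes> y' l)"
    have A': "(\<Oplus>l\<in>{..<d}-{k}. x' l \<otimes> y l) = A" unfolding A_def
      by (rule finsum_cong') (use off x y in \<open>auto simp: vecsD\<close>)
    have B': "(\<Oplus>l\<in>{..<d}-{k}. x' l \<otimes> y' l) = B" unfolding B_def
      by (rule finsum_cong') (use off x y' in \<open>auto simp: vecsD\<close>)
    have Ac: "A \<in> carrier R" unfolding A_def by (intro finsum_closed) (use x y vecsD in fastforce)
    have Bc: "B \<in> carrier R" unfolding B_def by (intro finsum_closed) (use x y' vecsD in fastforce)
    have h1: "x k \<otimes> y k \<oplus> A = x k \<otimes> y' k \<oplus> B"
      using xH dotp_split[OF x y k(1)] dotp_split[OF x y' k(1)] unfolding A_def B_def by simp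
    have h2: "x' k \<otimes> y k \<oplus> A = x' k \<otimes> y' k \<oplus> B"
      using x'H dotp_split[OF x' y k(1)] dotp_split[OF x' y' k(1)] A' B' by simp
    have c: "x k \<in> carrier R" "x' k \<in> carrier R" "y k \<in> carrier R" "y' k \<in> carrier R"
      using x x' y y' k vecsD by auto
    have "(x k \<ominus> x' k) \<otimes> (y k \<ominus> y' k) = \<zero>"
      using eq_shift[OF _ Ac _ Bc h1] eq_shift[OF _ Ac _ Bc h2] c
      by (intro prod_zero) auto
    moreover have "y k \<ominus> y' k \<noteq> \<zero>" using k c by simp
    ultimately have "x k \<ominus> x' k = \<zero>" using c integral_iff[of "x k \<ominus> x' k" "y k \<ominus> y' k"] by simp
    then have kk: "x k = x' k" using c by simp
    show "x = x'"
    proof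
      fix l show "x l = x' l"
      proof (cases "l < d")
        case True
        show ?thesis
        proof (cases "l = k")
          case True then show ?thesis using kk by simp
        next
          case False then show ?thesis using off \<open>l < d\<close> by blast
        qed
      next
        case False
        have "x l = undefined" using PiE_arb[of x "{..<d}" "\<lambda>_. carrier R" l] x False unfolding vecs_def by simp
        moreover have "x' l = undefined" using PiE_arb[of x' "{..<d}" "\<lambda>_. carrier R" l] x' False unfolding vecs_def by simp
        ultimately show ?thesis by simp
      qed
    qed
  qed
  have sub: "?f ` ?H \<subseteq> PiE ({..<d}-{k}) (\<lambda>_. carrier R)"
  proof
    fix z assume "z \<in> ?f ` ?H"
    then obtain x where x: "x \<in> vecs R d" and z: "z = ?f x" by auto
    show "z \<in> PiE ({..<d}-{k}) (\<lambda>_. carrier R)"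
      unfolding z by (rule restrict_PiE_iff[THEN iffD2]) (use x vecsD in auto)
  qed
  have "card ?H = card (?f ` ?H)" using inj by (simp add: card_image)
  also have "\<dots> \<le> card (PiE ({..<d}-{k}) (\<lambda>_. carrier R))"
    using sub fin by (intro card_mono) (auto simp: finite_PiE)
  also have "\<dots> = card (carrier R) ^ (d - 1)" using k by (simp add: card_PiE)
  finally show ?thesis .
qed

lemma smult_inv:
  assumes s: "s \<in> carrier R" "s \<noteq> \<zero>" and x: "x \<in> vecs R d"
  shows "smultv R d (inv s) (smultv R d s x) = x"
proof
  fix k
  have su: "s \<in> Units R" using s field_Units by auto
  show "smultv R d (inv s) (smultv R d s x) k = x k"
  proof (cases "k < d")
    case True
    then have xk: "x k \<in> carrier R" using x vecsD by auto
    have "inv s \<otimes> (s \<otimes> x k) = (inv s \<otimes> s) \<otimes> x k" using su xk Units_closed[OF su] Units_inv_closed[OF su] m_assoc[of "inv s" s "x k", symmetric] by simp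
    also have "\<dots> = x k" using su xk by simp
    finally show ?thesis using True unfolding smultv_def by simp
  next
    case False
    have "x k = undefined" using PiE_arb[of x "{..<d}" "\<lambda>_. carrier R" k] x False unfolding vecs_def by simp
    then show ?thesis using False unfolding smultv_def by simp
  qed
qed

lemma qnorm_zero: "qnorm R d (restrict (\<lambda>k. \<zero>) {..<d}) = \<zero>"
proof -
  have "qnorm R d (restrict (\<lambda>k. \<zero>) {..<d}) = (\<Oplus>k\<in>{..<d}. \<zero>)"
    unfolding qnorm_def by (rule finsum_cong') auto
  then show ?thesis by simp
qed

lemma sq_eq_cases:
  assumes c: "s \<in> carrier R" "t \<in> carrier R" and h: "s \<otimes> s = t \<otimes> t"
  shows "s = t \<or> s = \<ominus> t"
proof -
  have "(s \<ominus> t) \<otimes> (s \<oplus> t) = s \<otimes> s \<ominus> t \<otimes> t" using c by algebra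
  also have "\<dots> = \<zero>" using h c by simp
  finally have "s \<ominus> t = \<zero> \<or> s \<oplus> t = \<zero>" using c integral_iff by simp
  moreover have "s \<oplus> t = \<zero> \<Longrightarrow> s = \<ominus> t"
  proof -
    assume h2: "s \<oplus> t = \<zero>"
    have "s = (s \<oplus> t) \<ominus> t" using c by algebra
    then show ?thesis using h2 c by (simp add: minus_eq)
  qed
  ultimately show ?thesis using c by auto
qed

lemma fiber_card:
  assumes i: "i \<in> carrier R" "i \<noteq> \<zero>" and E: "E \<subseteq> sphere_ff R d i"
  shows "card {p \<in> (carrier R - {\<zero>}) \<times> E. smultv R d (fst p) (snd p) = z} \<le> 2"
proof (cases "{p \<in> (carrier R - {\<zero>}) \<times> E. smultv R d (fst p) (snd p) = z} = {}")
  case True then show ?thesis by (simp only: card.empty)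
next
  case False
  let ?P = "{p \<in> (carrier R - {\<zero>}) \<times> E. smultv R d (fst p) (snd p) = z}"
  obtain s0 x0 where p0: "(s0, x0) \<in> ?P" using False by auto
  have s0: "s0 \<in> carrier R" "s0 \<noteq> \<zero>" and x0: "x0 \<in> vecs R d" "qnorm R d x0 = i"
    using p0 E by (auto simp: sphere_ff_def)
  have z0: "qnorm R d z = (s0 \<otimes> s0) \<otimes> i" using p0 qnorm_smult[OF s0(1) x0(1)] x0 by auto
  let ?g = "\<lambda>s. (s, smultv R d (inv s) z)"
  have "?P \<subseteq> ?g ` {s0, \<ominus> s0}"
  proof
    fix p assume p: "p \<in> ?P"
    obtain s x where px: "p = (s, x)" by (cases p)
    have s: "s \<in> carrier R" "s \<noteq> \<zero>" and x: "x \<in> vecs R d" "qnorm R d x = i" and zz: "smultv R d s x = z"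
      using p E px by (auto simp: sphere_ff_def)
    have "(s \<otimes> s) \<otimes> i = (s0 \<otimes> s0) \<otimes> i" using z0 zz qnorm_smult[OF s(1) x(1)] x by simp
    then have "s \<otimes> s = s0 \<otimes> s0" using m_rcancel[of i "s \<otimes> s" "s0 \<otimes> s0"] i s s0 by simp
    then have "s = s0 \<or> s = \<ominus> s0" using sq_eq_cases s s0 by simp
    moreover have "x = smultv R d (inv s) z" using smult_inv[OF s x(1)] zz by simp
    ultimately show "p \<in> ?g ` {s0, \<ominus> s0}" using px by auto
  qed
  then have "card ?P \<le> card (?g ` {s0, \<ominus> s0})" by (intro card_mono) auto
  also have "\<dots> \<le> card {s0, \<ominus> s0}" by (rule card_image_le) simp
  also have "\<dots> \<le> 2" by (simp add: card_insert_if)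
  finally show ?thesis .
qed

lemma K_smult:
  assumes s: "s \<in> carrier R" "s \<noteq> \<zero>" and x: "x \<in> vecs R d" and F: "F \<subseteq> vecs R d"
  shows "Kf R d F (smultv R d s x) = Kf R d F x"
proof -
  have "{p \<in> F \<times> F. dotp R d (smultv R d s x) (fst p) = dotp R d (smultv R d s x) (snd p)}
      = {p \<in> F \<times> F. dotp R d x (fst p) = dotp R d x (snd p)}"
  proof (intro Collect_cong conj_cong refl)
    fix p assume "p \<in> F \<times> F"
    then have a: "fst p \<in> vecs R d" "snd p \<in> vecs R d" using F by auto
    show "(dotp R d (smultv R d s x) (fst p) = dotp R d (smultv R d s x) (snd p)) = (dotp R d x (fst p) = dotp R d x (snd p))"
      using dotp_smult[OF s(1) x a(1)] dotp_smult[OF s(1) x a(2)] m_lcancel[OF s(2) s(1) dotp_closed[OF x a(1)] dotp_closed[OF x a(2)]]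
      by simp
  qed
  then show ?thesis unfolding Kf_def by simp
qed

lemma K_zero:
  assumes F: "F \<subseteq> vecs R d" shows "Kf R d F (restrict (\<lambda>k. \<zero>) {..<d}) = card F ^ 2"
proof -
  have "{p \<in> F \<times> F. dotp R d (restrict (\<lambda>k. \<zero>) {..<d}) (fst p) = dotp R d (restrict (\<lambda>k. \<zero>) {..<d}) (snd p)} = F \<times> F"
    using F dotp_zero by (auto simp: subset_iff)
  then show ?thesis unfolding Kf_def by (simp add: card_cartesian_product power2_eq_square)
qed

lemma K_sum:
  assumes fin: "finite (carrier R)" and F: "F \<subseteq> vecs R d"
  shows "(\<Sum>x\<in>vecs R d. Kf R d F x) \<le> card F ^ 2 * card (carrier R) ^ (d - 1) + card F * card (carrier R) ^ d"
proof -
  let ?q = "card (carrier R)"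
  have fV: "finite (vecs R d)" using fin by (rule finite_vecs)
  have fF: "finite F" using F fV finite_subset by blast
  have "(\<Sum>x\<in>vecs R d. Kf R d F x) = (\<Sum>p\<in>F \<times> F. card {x \<in> vecs R d. dotp R d x (fst p) = dotp R d x (snd p)})"
    unfolding Kf_def by (rule swap_count) (use fV fF in auto)
  also have "\<dots> \<le> (\<Sum>p\<in>F \<times> F. ?q ^ (d - 1) + (if fst p = snd p then ?q ^ d else 0))"
  proof (rule sum_mono)
    fix p assume p: "p \<in> F \<times> F"
    show "card {x \<in> vecs R d. dotp R d x (fst p) = dotp R d x (snd p)} \<le> ?q ^ (d - 1) + (if fst p = snd p then ?q ^ d else 0)"
    proof (cases "fst p = snd p")
      case True
      have "card {x \<in> vecs R d. dotp R d x (fst p) = dotp R d x (snd p)} \<le> card (vecs R d)"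
        using fV by (intro card_mono) auto
      then show ?thesis using True card_vecs[OF fin] by simp
    next
      case False
      have "fst p \<in> vecs R d" "snd p \<in> vecs R d" using p F by auto
      then show ?thesis using hyperplane_card[OF fin, where y="fst p" and y'="snd p" and d=d] False by simp
    qed
  qed
  also have "\<dots> = card (F \<times> F) * ?q ^ (d - 1) + ?q ^ d * card {p \<in> F \<times> F. fst p = snd p}"
    using fF by (simp add: sum.distrib sum.inter_filter[symmetric])
  also have "card {p \<in> F \<times> F. fst p = snd p} = card F"
  proof -
    have "{p \<in> F \<times> F. fst p = snd p} = (\<lambda>y. (y, y)) ` F" by auto
    moreover have "inj_on (\<lambda>y. (y, y)) F" by (auto simp: inj_on_def)
    ultimately show ?thesis by (simp add: card_image)
  qed
  finally show ?thesis by (simp add: card_cartesian_product power2_eq_square mult.commute)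
qed

end


lemma (in field) qnorm_sub_closed:
  assumes "x \<in> vecs R d" "y \<in> vecs R d" shows "qnorm R d (\<lambda>k. x k \<ominus> y k) \<in> carrier R"
proof (rule qnorm_closed')
  fix k assume "k < d" then show "x k \<ominus> y k \<in> carrier R" using assms vecsD by auto
qed

lemma (in field) main_bound:
  assumes fin: "finite (carrier R)" and ch: "fring_char R > 2"
    and i: "i \<in> carrier R - {\<zero>\<^bsub>R\<^esub>}" and j: "j \<in> carrier R - {\<zero>\<^bsub>R\<^esub>}"
    and E: "E \<subseteq> sphere_ff R d i" and F: "F \<subseteq> sphere_ff R d j"
    and big: "real (card E) * real (card F) \<ge> 4 * real (card (carrier R)) ^ d"
    and d: "d \<ge> 1"
  shows "real (card (dist_set R d E F)) \<ge> 1/2 * real (card (carrier R))"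
proof -
  define q where "q = real (card (carrier R))"
  define V where "V = vecs R d"
  define T where "T = carrier R"
  define zv where "zv = restrict (\<lambda>k. \<zero>) {..<d}"
  define N where "N = real (card E) * real (card F)"
  define D where "D = dist_set R d E F"
  have fV: "finite V" unfolding V_def using fin by (rule finite_vecs)
  have EV: "E \<subseteq> V" and FV: "F \<subseteq> V" using E F unfolding V_def sphere_ff_def by auto
  have fE: "finite E" and fF: "finite F" using EV FV fV finite_subset by auto
  have fT: "finite T" using fin T_def by simp
  have q2: "q \<ge> 2"
  proof -
    have "{\<zero>, \<one>} \<subseteq> carrier R" by simp
    then have "card {\<zero>, \<one>} \<le> card (carrier R)" using fin by (intro card_mono) auto
    then show ?thesis unfolding q_def by simp
  qed
  have two: "\<one> \<oplus> \<one> \<noteq> \<zero>" by (rule two_ne_zero[OF ch])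
  have DT: "D \<subseteq> T" unfolding D_def dist_set_def T_def using EV FV unfolding V_def
    by (auto intro!: qnorm_sub_closed simp: subset_iff)
  have fD: "finite D" using DT fT finite_subset by auto
  define nn where "nn x t = card {y \<in> F. qnorm R d (\<lambda>k. x k \<ominus> y k) = t}" for x t
  define \<nu> where "\<nu> t = (\<Sum>x\<in>E. real (nn x t))" for t
  have gT: "(\<lambda>y. qnorm R d (\<lambda>k. x k \<ominus> y k)) ` F \<subseteq> T" if "x \<in> V" for x
    using that FV unfolding T_def V_def by (auto intro!: qnorm_sub_closed simp: subset_iff)
  have nsum: "(\<Sum>t\<in>T. real (nn x t)) = real (card F)" if "x \<in> V" for x
    using card_fibers_sum[OF fF fT gT[OF that]] unfolding nn_def
    by (metis (no_types, lifting) of_nat_sum sum.cong)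
  have \<nu>sum: "(\<Sum>t\<in>T. \<nu> t) = N"
  proof -
    have "(\<Sum>t\<in>T. \<nu> t) = (\<Sum>x\<in>E. \<Sum>t\<in>T. real (nn x t))"
      unfolding \<nu>_def by (rule sum.swap)
    also have "\<dots> = (\<Sum>x\<in>E. real (card F))" using nsum EV by (intro sum.cong) auto
    finally show ?thesis unfolding N_def by simp
  qed
  have \<nu>D: "\<nu> t = 0" if "t \<in> T - D" for t
  proof -
    have "nn x t = 0" if "x \<in> E" for x
    proof -
      have e: "{y \<in> F. qnorm R d (\<lambda>k. x k \<ominus> y k) = t} = {}" using \<open>t \<in> T - D\<close> \<open>x \<in> E\<close>
        unfolding D_def dist_set_def by auto
      show ?thesis unfolding nn_def e by (rule card.empty)
    qed
    then show ?thesis unfolding \<nu>_def by simp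
  qed
  have \<nu>sumD: "(\<Sum>t\<in>D. \<nu> t) = N"
    using \<nu>sum sum.mono_neutral_left[OF fT DT, of \<nu>] \<nu>D by simp
  have nonneg: "0 \<le> \<nu> t" for t unfolding \<nu>_def by (simp add: sum_nonneg)
  have step1: "N^2 \<le> real (card D) * (\<Sum>t\<in>T. (\<nu> t)^2)"
  proof -
    have "N^2 \<le> real (card D) * (\<Sum>t\<in>D. (\<nu> t)^2)" using cs_sum[OF fD, of \<nu>] \<nu>sumD by simp
    also have "\<dots> \<le> real (card D) * (\<Sum>t\<in>T. (\<nu> t)^2)"
      by (intro mult_left_mono sum_mono2[OF fT DT]) auto
    finally show ?thesis .
  qed
  define \<phi> where "\<phi> x = real (Kf R d F x) - (real (card F))^2 / q" for x
  have Kx: "(\<Sum>t\<in>T. (real (nn x t))^2) = real (Kf R d F x)" if "x \<in> V" for x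
  proof -
    have "card {p \<in> F \<times> F. qnorm R d (\<lambda>k. x k \<ominus> fst p k) = qnorm R d (\<lambda>k. x k \<ominus> snd p k)}
       = (\<Sum>t\<in>T. (nn x t)^2)"
      using card_pairs_eq[OF fF fT gT[OF that]] unfolding nn_def by simp
    moreover have "{p \<in> F \<times> F. qnorm R d (\<lambda>k. x k \<ominus> fst p k) = qnorm R d (\<lambda>k. x k \<ominus> snd p k)}
       = {p \<in> F \<times> F. dotp R d x (fst p) = dotp R d x (snd p)}"
    proof (intro Collect_cong conj_cong refl)
      fix p assume "p \<in> F \<times> F"
      then have a: "fst p \<in> sphere_ff R d j" "snd p \<in> sphere_ff R d j" using F by auto
      show "(qnorm R d (\<lambda>k. x k \<ominus> fst p k) = qnorm R d (\<lambda>k. x k \<ominus> snd p k)) = (dotp R d x (fst p) = dotp R d x (snd p))"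
        using dist_eq_iff[OF two, of x d "fst p" "snd p"] that a unfolding V_def sphere_ff_def by simp
    qed
    ultimately have "Kf R d F x = (\<Sum>t\<in>T. (nn x t)^2)" unfolding Kf_def by simp
    then show ?thesis by simp
  qed
  have \<phi>nn: "0 \<le> \<phi> x" if "x \<in> V" for x
  proof -
    have dT: "(\<lambda>y. dotp R d x y) ` F \<subseteq> T" using that FV unfolding T_def V_def by (auto intro: dotp_closed)
    have K: "real (Kf R d F x) = (\<Sum>t\<in>T. (real (card {y \<in> F. dotp R d x y = t}))^2)"
      using card_pairs_eq[OF fF fT dT] unfolding Kf_def by simp
    have S: "(\<Sum>t\<in>T. real (card {y \<in> F. dotp R d x y = t})) = real (card F)"
      using card_fibers_sum[OF fF fT dT] by (simp flip: of_nat_sum)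
    have "(real (card F))^2 \<le> q * real (Kf R d F x)"
      using cs_sum[OF fT, of "\<lambda>t. real (card {y \<in> F. dotp R d x y = t})"] K S unfolding q_def T_def by simp
    then show ?thesis unfolding \<phi>_def using q2 by (simp add: field_simps)
  qed
  have step2: "(\<Sum>t\<in>T. (\<nu> t)^2) \<le> N^2 / q + real (card E) * (\<Sum>x\<in>E. \<phi> x)"
  proof -
    have "(\<Sum>t\<in>T. (\<nu> t)^2) \<le> (real (card E) * real (card F))^2 / q
          + real (card E) * (\<Sum>x\<in>E. (\<Sum>t\<in>T. (real (nn x t))^2) - (real (card F))^2 / q)"
      unfolding \<nu>_def by (rule mean_removal[OF fE fT]) (use q_def T_def q2 nsum EV in auto)
    also have "(\<Sum>x\<in>E. (\<Sum>t\<in>T. (real (nn x t))^2) - (real (card F))^2 / q) = (\<Sum>x\<in>E. \<phi> x)"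
      unfolding \<phi>_def using Kx EV by (intro sum.cong) auto
    finally show ?thesis unfolding N_def .
  qed
  have zvV: "zv \<in> V" unfolding zv_def V_def vecs_def by auto
  have fA: "finite ((T - {\<zero>}) \<times> E)" using fT fE by auto
  have cT0: "real (card (T - {\<zero>})) = q - 1"
  proof -
    have "card (carrier R) \<ge> 1" using q2 unfolding q_def by simp
    then show ?thesis using fT unfolding q_def T_def by (simp add: card_Diff_singleton of_nat_diff)
  qed
  have step3: "(q - 1) * (\<Sum>x\<in>E. \<phi> x) \<le> 2 * (\<Sum>z\<in>V - {zv}. \<phi> z)"
  proof -
    have inner: "(\<Sum>s\<in>T - {\<zero>}. \<phi> (smultv R d s x)) = (q - 1) * \<phi> x" if "x \<in> E" for x
    proof -
      have "(\<Sum>s\<in>T - {\<zero>}. \<phi> (smultv R d s x)) = (\<Sum>s\<in>T - {\<zero>}. \<phi> x)"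
        using K_smult[of _ x d F] that EV FV unfolding \<phi>_def T_def V_def by (intro sum.cong) auto
      then show ?thesis using cT0 by simp
    qed
    have "(q - 1) * (\<Sum>x\<in>E. \<phi> x) = (\<Sum>x\<in>E. \<Sum>s\<in>T - {\<zero>}. \<phi> (smultv R d s x))"
      using inner by (simp add: sum_distrib_left)
    also have "\<dots> = (\<Sum>s\<in>T - {\<zero>}. \<Sum>x\<in>E. \<phi> (smultv R d s x))" by (rule sum.swap)
    also have "\<dots> = (\<Sum>p\<in>(T - {\<zero>}) \<times> E. \<phi> (smultv R d (fst p) (snd p)))"
      by (simp add: sum.cartesian_product case_prod_beta)
    also have "\<dots> \<le> 2 * (\<Sum>z\<in>V - {zv}. \<phi> z)"
    proof (rule fiber_sum[OF fA])
      show "finite (V - {zv})" using fV by simp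
      show "(\<lambda>p. smultv R d (fst p) (snd p)) ` ((T - {\<zero>}) \<times> E) \<subseteq> V - {zv}"
      proof
        fix w assume "w \<in> (\<lambda>p. smultv R d (fst p) (snd p)) ` ((T - {\<zero>}) \<times> E)"
        then obtain p where p: "p \<in> (T - {\<zero>}) \<times> E" and wp: "w = smultv R d (fst p) (snd p)" by (rule imageE)
        define s where "s = fst p"
        define x where "x = snd p"
        have s: "s \<in> T" "s \<noteq> \<zero>" and x: "x \<in> E" using p unfolding s_def x_def by auto
        have w: "w = smultv R d s x" using wp unfolding s_def x_def .
        have xv: "x \<in> vecs R d" "qnorm R d x = i" using x E by (auto simp: sphere_ff_def)
        have sc: "s \<in> carrier R" using s T_def by simp
        have wV: "w \<in> V" unfolding V_def w using smultv_vecs[OF sc xv(1)] .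
        have "w \<noteq> zv"
        proof
          assume eq: "w = zv"
          have "(s \<otimes> s) \<otimes> i = \<zero>" using qnorm_smult[OF sc xv(1)] xv(2) eq w qnorm_zero unfolding zv_def by simp
          moreover have "s \<otimes> s \<noteq> \<zero>" using sc s(2) integral_iff by simp
          ultimately show False using i sc integral_iff[of "s \<otimes> s" i] by simp
        qed
        then show "w \<in> V - {zv}" using wV by simp
      qed
      show "card {a \<in> (T - {\<zero>}) \<times> E. smultv R d (fst a) (snd a) = z} \<le> 2" if "z \<in> V - {zv}" for z
        using fiber_card[of i E d z] i E unfolding T_def by simp
      show "0 \<le> \<phi> z" if "z \<in> V - {zv}" for z using \<phi>nn that by simp
    qed
    finally show ?thesis .
  qed
  have step4: "(\<Sum>z\<in>V - {zv}. \<phi> z) \<le> real (card F) * q ^ d"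
  proof -
    have cV: "real (card V) = q ^ d" unfolding V_def q_def using card_vecs[OF fin] by simp
    have KS: "(\<Sum>x\<in>V. real (Kf R d F x)) \<le> (real (card F))^2 * q ^ (d - 1) + real (card F) * q ^ d"
    proof -
      have "(\<Sum>x\<in>V. Kf R d F x) \<le> card F ^ 2 * card (carrier R) ^ (d - 1) + card F * card (carrier R) ^ d"
        unfolding V_def using K_sum[OF fin] FV unfolding V_def by simp
      then have "real (\<Sum>x\<in>V. Kf R d F x) \<le> real (card F ^ 2 * card (carrier R) ^ (d - 1) + card F * card (carrier R) ^ d)"
        by (rule of_nat_mono)
      then show ?thesis unfolding q_def by simp
    qed
    have Kz: "\<phi> zv = (real (card F))^2 - (real (card F))^2 / q"
      unfolding \<phi>_def zv_def using K_zero FV unfolding V_def by simp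
    have qd0: "q ^ d = q * q ^ (d - 1)" using d by (cases d) auto
    have qd: "q ^ (d - 1) = q ^ d / q" using qd0 q2 by simp
    have "(\<Sum>z\<in>V - {zv}. \<phi> z) = (\<Sum>z\<in>V. \<phi> z) - \<phi> zv"
      using fV zvV by (simp add: sum_diff1)
    also have "(\<Sum>z\<in>V. \<phi> z) = (\<Sum>x\<in>V. real (Kf R d F x)) - q ^ d * (real (card F))^2 / q"
      unfolding \<phi>_def using cV by (simp add: sum_subtractf)
    finally have eqn: "(\<Sum>z\<in>V - {zv}. \<phi> z) = (\<Sum>x\<in>V. real (Kf R d F x)) - q ^ d * (real (card F))^2 / q - \<phi> zv" .
    have KS': "(\<Sum>x\<in>V. real (Kf R d F x)) \<le> q ^ d * (real (card F))^2 / q + real (card F) * q ^ d"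
      using KS qd by (simp add: field_simps)
    have "(real (card F))^2 / q \<le> (real (card F))^2" using q2 by (simp add: field_simps mult_le_cancel_right1)
    then have "(\<Sum>z\<in>V - {zv}. \<phi> z) \<le> real (card F) * q ^ d" using eqn KS' Kz by linarith
    then show ?thesis .
  qed
  have qd_pos: "q ^ d > 0" using q2 by simp
  have Npos: "N > 0" using big qd_pos unfolding N_def q_def by linarith
  have Nbig: "4 * q ^ d \<le> N" using big unfolding N_def q_def by simp
  have h0: "(\<Sum>x\<in>E. \<phi> x) \<le> 2 * real (card F) * q ^ d / (q - 1)"
  proof -
    have "(q - 1) * (\<Sum>x\<in>E. \<phi> x) \<le> 2 * real (card F) * q ^ d" using step3 step4 by linarith
    then show ?thesis using q2 by (simp add: pos_le_divide_eq mult.commute)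
  qed
  have h1: "real (card E) * (\<Sum>x\<in>E. \<phi> x) \<le> 2 * N * q ^ d / (q - 1)"
  proof -
    have "real (card E) * (\<Sum>x\<in>E. \<phi> x) \<le> real (card E) * (2 * real (card F) * q ^ d / (q - 1))"
      using h0 by (intro mult_left_mono) auto
    then show ?thesis unfolding N_def by (simp add: ac_simps)
  qed
  have h2: "2 * N * q ^ d / (q - 1) \<le> N^2 / q"
  proof -
    have a: "2 * N * q ^ d * q \<le> N * (N / 2) * q"
      using Nbig Npos q2 by (intro mult_right_mono) (auto simp: mult_left_mono)
    have b: "N * (N / 2) * q \<le> N^2 * (q - 1)"
    proof -
      have "q / 2 \<le> q - 1" using q2 by simp
      then have "N^2 * (q / 2) \<le> N^2 * (q - 1)" by (intro mult_left_mono) auto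
      then show ?thesis by (simp add: power2_eq_square field_simps)
    qed
    have "2 * N * q ^ d * q \<le> N^2 * (q - 1)" using a b by linarith
    then show ?thesis using q2 by (simp add: field_simps)
  qed
  have "N^2 \<le> real (card D) * (2 * N^2 / q)"
  proof -
    have "(\<Sum>t\<in>T. (\<nu> t)^2) \<le> 2 * N^2 / q" using step2 h1 h2 by simp
    then have "real (card D) * (\<Sum>t\<in>T. (\<nu> t)^2) \<le> real (card D) * (2 * N^2 / q)"
      by (intro mult_left_mono) auto
    then show ?thesis using step1 by linarith
  qed
  then have "N^2 * q \<le> N^2 * (2 * real (card D))" using q2 by (simp add: field_simps)
  then have "q \<le> 2 * real (card D)" using Npos by (simp add: mult_le_cancel_left_pos)
  then show ?thesis unfolding D_def q_def by simp
qed

theorem theorem3p3: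
  fixes d :: nat
  assumes "d \<ge> 3"
  shows "\<exists>C c :: real. C > 1 \<and> 0 < c \<and> c < 1 \<and>
    (\<forall>(R :: nat ring) i j E F.
       field R \<longrightarrow> finite (carrier R) \<longrightarrow> fring_char R > 2 \<longrightarrow>
       i \<in> carrier R - {\<zero>\<^bsub>R\<^esub>} \<longrightarrow> j \<in> carrier R - {\<zero>\<^bsub>R\<^esub>} \<longrightarrow>
       E \<subseteq> sphere_ff R d i \<longrightarrow> F \<subseteq> sphere_ff R d j \<longrightarrow>
       real (card E) * real (card F) \<ge> C * real (card (carrier R)) ^ d \<longrightarrow>
       real (card (dist_set R d E F)) \<ge> c * real (card (carrier R)))"
proof -
  have d1: "d \<ge> 1" using assms by simp
  have main: "\<forall>(R :: nat ring) i j E F.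
       field R \<longrightarrow> finite (carrier R) \<longrightarrow> fring_char R > 2 \<longrightarrow>
       i \<in> carrier R - {\<zero>\<^bsub>R\<^esub>} \<longrightarrow> j \<in> carrier R - {\<zero>\<^bsub>R\<^esub>} \<longrightarrow>
       E \<subseteq> sphere_ff R d i \<longrightarrow> F \<subseteq> sphere_ff R d j \<longrightarrow>
       real (card E) * real (card F) \<ge> 4 * real (card (carrier R)) ^ d \<longrightarrow>
       real (card (dist_set R d E F)) \<ge> 1/2 * real (card (carrier R))"
  proof (intro allI impI)
    fix R :: "nat ring" and i j E F
    assume h: "field R" "finite (carrier R)" "fring_char R > 2"
      "i \<in> carrier R - {\<zero>\<^bsub>R\<^esub>}" "j \<in> carrier R - {\<zero>\<^bsub>R\<^esub>}"
      "E \<subseteq> sphere_ff R d i" "F \<subseteq> sphere_ff R d j"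
      "real (card E) * real (card F) \<ge> 4 * real (card (carrier R)) ^ d"
    show "real (card (dist_set R d E F)) \<ge> 1/2 * real (card (carrier R))"
      by (rule field.main_bound[OF h d1])
  qed
  show ?thesis
    by (rule exI[of _ "4::real"], rule exI[of _ "1/2::real"]) (use main in simp)
qed

end
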